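(* Fix a prompt $x$ and two responses $y_w$ (preferred) and $y_l$ (dispreferred), a constant $\beta>0$, and reference probabilities $a_0=\pi_{ref}(y_w\mid x)\in(0,1)$, $b_0=\pi_{ref}(y_l\mid x)\in(0,1)$. Regard $a=\pi_\theta(y_w\mid x)\in(0,1)$ and $b=\pi_\theta(y_l\mid x)\in(0,1)$ as independent variables and define $$\lambda_w(a,b)=\frac{\log b}{\log a+\log b},\qquad \mathcal{L}_{bdpo}(a,b)=-\log\sigma\!\Big(\beta\lambda_w(a,b)\log\frac{a}{a_0}-\beta\big(1-\lambda_w(a,b)\big)\log\frac{b}{b_0}\Big),$$ where $\sigma(t)=1/(1+e^{-t})$. Then at the point where $\pi_\theta\equiv\pi_{ref}$, i.e. at $(a,b)=(a_0,b_0)$, $$\frac{\partial \mathcal{L}_{bdpo}}{\partial \pi_\theta(y_w\mid x)}\Big/\frac{\partial \mathcal{L}_{bdpo}}{\partial \pi_\theta(y_l\mid x)}=-\frac{\pi_\theta(y_l\mid x)\log\pi_\theta(y_l\mid x)}{\pi_\theta(y_w\mid x)\log\pi_\theta(y_w\mid x)}.$$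
   Context: $\mathcal{L}_{bdpo}$ is the "Balanced DPO" loss for a single preference pair $(y_w\succ y_l)$ with prompt $x$; the partial derivatives are with respect to the two probabilities $a=\pi_\theta(y_w\mid x)$ and $b=\pi_\theta(y_l\mid x)$, with $\lambda_w$ also depending on them. *)

theory Defs
  imports "HOL-Analysis.Analysis"
begin

definition sigmoid :: "real \<Rightarrow> real" where
  "sigmoid t = 1 / (1 + exp (- t))"

definition lambda_w :: "real \<Rightarrow> real \<Rightarrow> real" where
  "lambda_w a b = ln b / (ln a + ln b)"

definition L_bdpo :: "real \<Rightarrow> real \<Rightarrow> real \<Rightarrow> real \<Rightarrow> real \<Rightarrow> real" where
  "L_bdpo \<beta> a0 b0 a b =
     - ln (sigmoid (\<beta> * lambda_w a b * ln (a / a0) - \<beta> * (1 - lambda_w a b) * ln (b / b0)))"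

end

theory Submission
  imports Defs
begin

lemma ratio_aux:
  fixes B p q x y S :: real
  assumes "B \<noteq> 0" "p \<noteq> 0" "x \<noteq> 0" "y \<noteq> 0" "S \<noteq> 0"
  shows "(- B * q / (2 * S * x)) / (B * p / (2 * S * y)) = - (y * q) / (x * p)"
  using assms by (simp add: field_simps)

theorem proposition5p1:
  fixes \<beta> a0 b0 :: real
  assumes "\<beta> > 0" and "0 < a0" "a0 < 1" and "0 < b0" "b0 < 1"
  shows "deriv (\<lambda>a. L_bdpo \<beta> a0 b0 a b0) a0 / deriv (\<lambda>b. L_bdpo \<beta> a0 b0 a0 b) b0
         = - (b0 * ln b0) / (a0 * ln a0)"
proof -
  have la: "ln a0 < 0" using assms by simp
  have lb: "ln b0 < 0" using assms by simp
  have s: "ln a0 + ln b0 \<noteq> 0" using la lb by simp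
  have k: "1 - ln b0/(ln a0+ln b0) = ln a0/(ln a0+ln b0)" using s by (simp add: field_simps)
  have da: "((\<lambda>a. L_bdpo \<beta> a0 b0 a b0) has_real_derivative
      (- \<beta> * ln b0 / (2 * (ln a0 + ln b0) * a0))) (at a0)"
    unfolding L_bdpo_def lambda_w_def sigmoid_def
    apply (rule derivative_eq_intros refl | use assms s in \<open>force simp: add_pos_pos\<close>)+
    done
  have db: "((\<lambda>b. L_bdpo \<beta> a0 b0 a0 b) has_real_derivative
      (\<beta> * ln a0 / (2 * (ln a0 + ln b0) * b0))) (at b0)"
    unfolding L_bdpo_def lambda_w_def sigmoid_def
    apply (rule derivative_eq_intros refl | use assms s in \<open>force simp: add_pos_pos\<close>)+
    apply (simp add: k)
    done
  have n1: "a0 \<noteq> 0" "b0 \<noteq> 0" "\<beta> \<noteq> 0" "ln a0 \<noteq> 0" using assms la by auto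
  have e: "(- \<beta> * ln b0 / (2 * (ln a0 + ln b0) * a0)) / (\<beta> * ln a0 / (2 * (ln a0 + ln b0) * b0))
      = - (b0 * ln b0) / (a0 * ln a0)"
    by (rule ratio_aux[OF n1(3) n1(4) n1(1) n1(2) s])
  show ?thesis
    unfolding DERIV_imp_deriv[OF da] DERIV_imp_deriv[OF db] by (rule e)
qed

end
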